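(* Every syndetically distal compact flow $(T,X)$ ($T$ a Hausdorff topological group, $X$ a compact Hausdorff space) is pointwise Bohr a.p.; that is, for every $x\in X$ the subflow $(T,\overline{Tx})$ is an a.p. flow.
   Context: $\mathscr U_X$ is the uniformity of $X$; $\varepsilon[x]=\{y:(x,y)\in\varepsilon\}$. $A\subseteq T$ is (right) syndetic if there is a compact $K\subseteq T$ with $Kt\cap A\neq\emptyset$ for all $t\in T$. $(T,X)$ is syndetically distal if for every $x\in X$ and $\varepsilon\in\mathscr U_X$ there exist a syndetic $S\subseteq T$ and $\delta\in\mathscr U_X$ such that whenever $y\notin\varepsilon[x]$ we have $ty\notin\delta[tx]$ for all $t\in S$. A flow $(T,Z)$ is an a.p. flow if for every $\alpha$ in its uniformity there is a syndetic $A\subseteq T$ with $Az\subseteq\alpha[z]$ for all $z\in Z$. *)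

theory Defs
  imports "HOL-Analysis.Analysis"
begin

text \<open>T is a Hausdorff topological group, written additively (group_add need not be
commutative). X is a uniform space; for compact Hausdorff X its uniformity is the unique
one compatible with the topology.\<close>

definition entourage :: "('x::uniform_space \<times> 'x) set \<Rightarrow> bool" where
  "entourage E \<longleftrightarrow> eventually (\<lambda>p. p \<in> E) uniformity"

definition ent_ball :: "('x \<times> 'x) set \<Rightarrow> 'x \<Rightarrow> 'x set" where
  "ent_ball E x = {y. (x, y) \<in> E}"

definition is_flow :: "('g::topological_group_add \<Rightarrow> 'x::topological_space \<Rightarrow> 'x) \<Rightarrow> bool" where
  "is_flow act \<longleftrightarrow> continuous_on UNIV (\<lambda>p. act (fst p) (snd p))
     \<and> (\<forall>x. act 0 x = x) \<and> (\<forall>s t x. act (s + t) x = act s (act t x))"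

definition syndetic :: "'g::topological_group_add set \<Rightarrow> bool" where
  "syndetic A \<longleftrightarrow> (\<exists>K. compact K \<and> (\<forall>t. (\<lambda>k. k + t) ` K \<inter> A \<noteq> {}))"

definition syndetically_distal ::
  "('g::topological_group_add \<Rightarrow> 'x::uniform_space \<Rightarrow> 'x) \<Rightarrow> bool" where
  "syndetically_distal act \<longleftrightarrow>
     (\<forall>x \<epsilon>. entourage \<epsilon> \<longrightarrow>
        (\<exists>S \<delta>. syndetic S \<and> entourage \<delta> \<and>
           (\<forall>y. y \<notin> ent_ball \<epsilon> x \<longrightarrow> (\<forall>t\<in>S. act t y \<notin> ent_ball \<delta> (act t x)))))"

text \<open>The subflow on an invariant set Z is a.p.: entourages of Z are E \<inter> Z \<times> Z for
entourages E of X (subspace uniformity).\<close>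
definition ap_subflow ::
  "('g::topological_group_add \<Rightarrow> 'x::uniform_space \<Rightarrow> 'x) \<Rightarrow> 'x set \<Rightarrow> bool" where
  "ap_subflow act Z \<longleftrightarrow>
     (\<forall>E. entourage E \<longrightarrow>
        (\<exists>A. syndetic A \<and> (\<forall>z\<in>Z. (\<lambda>a. act a z) ` A \<subseteq> ent_ball (E \<inter> Z \<times> Z) z)))"

definition orbit :: "('g \<Rightarrow> 'x \<Rightarrow> 'x) \<Rightarrow> 'x \<Rightarrow> 'x set" where
  "orbit act x = range (\<lambda>t. act t x)"

end

theory Submission
  imports Defs
begin

lemma ent_refl: "entourage E \<Longrightarrow> (x,x) \<in> E"
  unfolding entourage_def using uniformity_refl[of "\<lambda>p. p \<in> E"] by auto

lemma ent_mono: "entourage E \<Longrightarrow> E \<subseteq> F \<Longrightarrow> entourage F"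
  unfolding entourage_def by (auto elim: eventually_mono)

lemma ent_Int: "entourage E \<Longrightarrow> entourage F \<Longrightarrow> entourage (E \<inter> F)"
  unfolding entourage_def by (simp add: eventually_conj)

lemma ent_conv: "entourage E \<Longrightarrow> entourage (converse E)"
  unfolding entourage_def
  apply (drule uniformity_sym)
  apply (erule eventually_mono)
  by (auto simp: case_prod_unfold)

lemma ent_INT: "finite I \<Longrightarrow> (\<And>i. i \<in> I \<Longrightarrow> entourage (f i)) \<Longrightarrow> entourage (\<Inter>i\<in>I. f i)"
proof -
  assume "finite I" "\<And>i. i \<in> I \<Longrightarrow> entourage (f i)"
  then have "eventually (\<lambda>p. \<forall>i\<in>I. p \<in> f i) uniformity"
    by (intro eventually_ball_finite) (auto simp: entourage_def)
  then show ?thesis unfolding entourage_def by simp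
qed

lemma ent_half:
  assumes "entourage E"
  obtains D where "entourage D" "\<And>x y. (x,y) \<in> D \<Longrightarrow> (y,x) \<in> D"
    "\<And>x y z. (x,y) \<in> D \<Longrightarrow> (y,z) \<in> D \<Longrightarrow> (x,z) \<in> E"
proof -
  from assms obtain D0 where D0: "eventually D0 uniformity" "\<And>x y z. D0 (x, y) \<Longrightarrow> D0 (y, z) \<Longrightarrow> (x,z) \<in> E"
    using assms unfolding entourage_def by (metis uniformity_transE)
  let ?D = "{p. D0 p} \<inter> converse {p. D0 p}"
  have "entourage {p. D0 p}" using D0(1) by (simp add: entourage_def)
  then have "entourage ?D" by (intro ent_Int ent_conv)
  moreover have "\<And>x y. (x,y) \<in> ?D \<Longrightarrow> (y,x) \<in> ?D" by auto
  moreover have "\<And>x y z. (x,y) \<in> ?D \<Longrightarrow> (y,z) \<in> ?D \<Longrightarrow> (x,z) \<in> E" using D0(2) by auto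
  ultimately show ?thesis using that by blast
qed

lemma ent_nbhd:
  assumes "entourage D"
  obtains U where "open U" "c \<in> U" "\<And>y. y \<in> U \<Longrightarrow> (c,y) \<in> D"
proof -
  have "eventually (\<lambda>y. (c,y) \<in> D) (nhds c)"
    unfolding eventually_nhds_uniformity using assms unfolding entourage_def
    by (auto elim: eventually_mono)
  then show ?thesis unfolding eventually_nhds using that by blast
qed

lemma ent_half':
  assumes "entourage E"
  shows "\<exists>D. entourage D \<and> (\<forall>x y. (x,y) \<in> D \<longrightarrow> (y,x) \<in> D) \<and>
    (\<forall>x y z. (x,y) \<in> D \<longrightarrow> (y,z) \<in> D \<longrightarrow> (x,z) \<in> E)"
  using ent_half[OF assms] by metis

lemma ent_nbhd':
  assumes "entourage D"
  shows "\<exists>U. open U \<and> c \<in> U \<and> (\<forall>y\<in>U. (c,y) \<in> D)"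
  using ent_nbhd[OF assms] by metis

lemma open_ent:
  assumes "open U" "u \<in> U"
  obtains F where "entourage F" "\<And>y. (u,y) \<in> F \<Longrightarrow> y \<in> U"
proof -
  have "eventually (\<lambda>y. y \<in> U) (nhds u)" using assms eventually_nhds by blast
  then have "eventually (\<lambda>(x', y). x' = u \<longrightarrow> y \<in> U) uniformity"
    by (simp add: eventually_nhds_uniformity)
  then have "entourage {p. fst p = u \<longrightarrow> snd p \<in> U}"
    unfolding entourage_def by (simp add: case_prod_unfold)
  then show ?thesis by (rule that) auto
qed

lemma open_ent':
  assumes "open U" "u \<in> U"
  shows "\<exists>F. entourage F \<and> (\<forall>y. (u,y) \<in> F \<longrightarrow> y \<in> U)"
  using open_ent[OF assms] by metis

lemma compact_cover:
  fixes U :: "'x::topological_space \<Rightarrow> 'x set"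
  assumes "compact K" "\<And>c. c \<in> K \<Longrightarrow> open (U c) \<and> c \<in> U c"
  obtains C where "finite C" "C \<subseteq> K" "\<And>p. p \<in> K \<Longrightarrow> \<exists>c\<in>C. p \<in> U c"
proof -
  have cov: "K \<subseteq> (\<Union>c\<in>K. U c)" using assms(2) by auto
  have opn: "\<And>T. T \<in> K \<Longrightarrow> open (U T)" using assms(2) by blast
  obtain C where "C \<subseteq> K" "finite C" "K \<subseteq> (\<Union>c\<in>C. U c)"
    by (rule compactE_image[OF assms(1) opn cov])
  note C = this
  show ?thesis
  proof (rule that)
    show "finite C" by (rule C(2))
    show "C \<subseteq> K" by (rule C(1))
    fix p assume "p \<in> K"
    then have "p \<in> (\<Union>c\<in>C. U c)" by (rule subsetD[OF C(3)])
    then show "\<exists>c\<in>C. p \<in> U c" by (simp only: UN_iff)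
  qed
qed


lemma compact_cover':
  fixes U :: "'x::topological_space \<Rightarrow> 'x set"
  assumes "compact K" "\<And>c. c \<in> K \<Longrightarrow> open (U c) \<and> c \<in> U c"
  shows "\<exists>C. finite C \<and> C \<subseteq> K \<and> (\<forall>p\<in>K. \<exists>c\<in>C. p \<in> U c)"
  using compact_cover[OF assms] by metis

lemma unif:
  fixes f :: "'i \<Rightarrow> 'x::uniform_space \<Rightarrow> 'x"
  assumes cpt: "compact (UNIV :: 'x set)"
    and pw: "\<And>u \<epsilon>. entourage \<epsilon> \<Longrightarrow> \<exists>\<eta>. entourage \<eta> \<and> (\<forall>i\<in>I. \<forall>v. (u,v)\<in>\<eta> \<longrightarrow> (f i u, f i v)\<in>\<epsilon>)"
    and e: "entourage \<epsilon>"
  shows "\<exists>\<eta>. entourage \<eta> \<and> (\<forall>i\<in>I. \<forall>u v. (u,v)\<in>\<eta> \<longrightarrow> (f i u, f i v) \<in> \<epsilon>)"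
proof -
  obtain e1 where e1: "entourage e1" "\<And>x y. (x,y) \<in> e1 \<Longrightarrow> (y,x) \<in> e1"
    "\<And>x y z. (x,y) \<in> e1 \<Longrightarrow> (y,z) \<in> e1 \<Longrightarrow> (x,z) \<in> \<epsilon>"
    using ent_half'[OF e] by blast
  define P where "P p D U \<longleftrightarrow> entourage D \<and> open U \<and> p \<in> U \<and> (\<forall>y\<in>U. (p,y)\<in>D) \<and>
      (\<forall>i\<in>I. \<forall>a b. (p,a)\<in>D \<longrightarrow> (a,b)\<in>D \<longrightarrow> (f i p, f i b)\<in>e1)" for p D U
  have "\<exists>D U. P p D U" for p
  proof -
    obtain \<eta> where \<eta>: "entourage \<eta>" "\<forall>i\<in>I. \<forall>v. (p,v)\<in>\<eta> \<longrightarrow> (f i p, f i v)\<in>e1"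
      using pw[OF e1(1)] by blast
    obtain D where D: "entourage D" "\<And>x y z. (x,y) \<in> D \<Longrightarrow> (y,z) \<in> D \<Longrightarrow> (x,z) \<in> \<eta>"
      using ent_half'[OF \<eta>(1)] by blast
    obtain U where U: "open U" "p \<in> U" "\<And>y. y \<in> U \<Longrightarrow> (p,y) \<in> D"
      using ent_nbhd'[OF D(1)] by metis
    have "P p D U" unfolding P_def
    proof (intro conjI ballI allI impI)
      show "entourage D" by (rule D(1))
      show "open U" by (rule U(1))
      show "p \<in> U" by (rule U(2))
      show "(p,y) \<in> D" if "y \<in> U" for y using U(3)[OF that] .
      fix i a b assume "i \<in> I" "(p,a) \<in> D" "(a,b) \<in> D"
      then show "(f i p, f i b) \<in> e1" using \<eta>(2) D(2) by blast
    qed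
    then show ?thesis by blast
  qed
  then obtain D U where DU: "\<And>p. P p (D p) (U p)" by metis
  have UU: "\<And>c. c \<in> UNIV \<Longrightarrow> open (U c) \<and> c \<in> U c" using DU unfolding P_def by simp
  from compact_cover'[OF cpt UU] obtain C where C: "finite C" "\<forall>p\<in>UNIV. \<exists>c\<in>C. p \<in> U c"
    by blast
  define \<eta> where "\<eta> = (\<Inter>c\<in>C. D c)"
  have "entourage \<eta>" unfolding \<eta>_def using C(1) DU unfolding P_def by (intro ent_INT) auto
  moreover have "(f i u, f i v) \<in> \<epsilon>" if "i \<in> I" "(u,v) \<in> \<eta>" for i u v
  proof -
    obtain c where c: "c \<in> C" "u \<in> U c" using C(2) by blast
    have Pc: "P c (D c) (U c)" by (rule DU)
    have cu: "(c,u) \<in> D c" using Pc c(2) unfolding P_def by blast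
    have uv: "(u,v) \<in> D c" using that(2) c(1) unfolding \<eta>_def by blast
    have uu: "(u,u) \<in> D c" using Pc unfolding P_def by (blast intro: ent_refl)
    have 1: "(f i c, f i u) \<in> e1" using Pc cu uu that(1) unfolding P_def by blast
    have 2: "(f i c, f i v) \<in> e1" using Pc cu uv that(1) unfolding P_def by blast
    show ?thesis using e1(2)[OF 1] 2 e1(3) by blast
  qed
  ultimately show ?thesis by blast
qed

context
  fixes act :: "'g::{topological_group_add, t2_space} \<Rightarrow> 'x::{uniform_space, t2_space} \<Rightarrow> 'x"
  assumes flow: "is_flow act"
begin

lemma act_add: "act (s + t) x = act s (act t x)"
  using flow unfolding is_flow_def by blast

lemma act_zero: "act 0 x = x"
  using flow unfolding is_flow_def by blast

lemma act_inv1: "act (- r) (act r x) = x"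
  by (metis act_add act_zero left_minus)

lemma act_inv2: "act r (act (- r) x) = x"
  by (metis act_add act_zero right_minus)

lemma act_cont_pt:
  assumes "entourage e"
  shows "\<exists>W F. open W \<and> k \<in> W \<and> entourage F \<and> (\<forall>k'\<in>W. \<forall>v. (u,v)\<in>F \<longrightarrow> (act k u, act k' v) \<in> e)"
proof -
  obtain U where U: "open U" "act k u \<in> U" "\<And>y. y \<in> U \<Longrightarrow> (act k u,y) \<in> e"
    using ent_nbhd'[OF assms] by metis
  let ?g = "\<lambda>p. act (fst p) (snd p)"
  have "continuous_on UNIV ?g" using flow unfolding is_flow_def by blast
  then have "open (?g -` U \<inter> UNIV)" using U(1) continuous_on_open_vimage[of UNIV ?g] by blast
  then have op: "open (?g -` U)" by simp
  have "(k,u) \<in> ?g -` U" using U(2) by simp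
  from open_prod_elim[OF op this] obtain A B where AB: "open A" "open B" "(k,u) \<in> A \<times> B" "A \<times> B \<subseteq> ?g -` U"
    by blast
  have uB: "u \<in> B" using AB(3) by simp
  from open_ent'[OF AB(2) uB] obtain F where F: "entourage F" "\<forall>y. (u,y) \<in> F \<longrightarrow> y \<in> B"
    by blast
  have "\<forall>k'\<in>A. \<forall>v. (u,v)\<in>F \<longrightarrow> (act k u, act k' v) \<in> e"
  proof (intro ballI allI impI)
    fix k' v assume "k' \<in> A" "(u,v) \<in> F"
    then have "(k', v) \<in> A \<times> B" using F(2) by simp
    then have "act k' v \<in> U" using AB(4) by auto
    then show "(act k u, act k' v) \<in> e" by (rule U(3))
  qed
  then show ?thesis using AB(1,3) F(1) by (intro exI[of _ A] exI[of _ F]) simp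
qed

lemma K_pointwise:
  assumes K: "compact K" and d: "entourage \<delta>"
  shows "\<exists>\<eta>. entourage \<eta> \<and> (\<forall>k\<in>K. \<forall>v. (u,v)\<in>\<eta> \<longrightarrow> (act k u, act k v) \<in> \<delta>)"
proof -
  obtain e where e: "entourage e" "\<And>x y. (x,y) \<in> e \<Longrightarrow> (y,x) \<in> e"
    "\<And>x y z. (x,y) \<in> e \<Longrightarrow> (y,z) \<in> e \<Longrightarrow> (x,z) \<in> \<delta>"
    using ent_half'[OF d] by blast
  have "\<forall>k. \<exists>W F. open W \<and> k \<in> W \<and> entourage F \<and> (\<forall>k'\<in>W. \<forall>v. (u,v)\<in>F \<longrightarrow> (act k u, act k' v) \<in> e)"
    using act_cont_pt[OF e(1)] by metis
  then obtain W F where WF: "\<And>k. open (W k) \<and> k \<in> W k \<and> entourage (F k) \<and> (\<forall>k'\<in>W k. \<forall>v. (u,v)\<in>F k \<longrightarrow> (act k u, act k' v) \<in> e)"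
    by metis
  have WW: "\<And>c. c \<in> K \<Longrightarrow> open (W c) \<and> c \<in> W c" using WF by simp
  from compact_cover'[OF K WW] obtain C where C: "finite C" "C \<subseteq> K" "\<forall>p\<in>K. \<exists>c\<in>C. p \<in> W c"
    by blast
  define \<eta> where "\<eta> = (\<Inter>c\<in>C. F c)"
  have WFe: "\<And>k. entourage (F k)" using WF by simp
  have WFc: "\<forall>k. \<forall>k'\<in>W k. \<forall>v. (u,v)\<in>F k \<longrightarrow> (act k u, act k' v) \<in> e"
    using WF by simp
  have "entourage \<eta>" unfolding \<eta>_def by (rule ent_INT[OF C(1)]) (rule WFe)
  moreover have "(act k u, act k v) \<in> \<delta>" if "k \<in> K" "(u,v) \<in> \<eta>" for k v
  proof -
    obtain c where c: "c \<in> C" "k \<in> W c" using C(3) \<open>k \<in> K\<close> by blast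
    have uv: "(u,v) \<in> F c" using that(2) c(1) unfolding \<eta>_def by blast
    have uu: "(u,u) \<in> F c" by (rule ent_refl[OF WFe])
    have 1: "(act c u, act k u) \<in> e" using WFc[rule_format, OF c(2) uu] .
    have 2: "(act c u, act k v) \<in> e" using WFc[rule_format, OF c(2) uv] .
    show ?thesis by (rule e(3)[OF e(2)[OF 1] 2])
  qed
  ultimately have "entourage \<eta> \<and> (\<forall>k\<in>K. \<forall>v. (u,v)\<in>\<eta> \<longrightarrow> (act k u, act k v) \<in> \<delta>)"
    by blast
  then show ?thesis by (rule exI)
qed

end

context
  fixes act :: "'g::{topological_group_add, t2_space} \<Rightarrow> 'x::{uniform_space, t2_space} \<Rightarrow> 'x"
  assumes flow: "is_flow act" and cpt: "compact (UNIV :: 'x set)"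
    and sd: "syndetically_distal act"
begin

lemma L:
  assumes e: "entourage \<epsilon>"
  shows "\<exists>\<eta>. entourage \<eta> \<and> (\<forall>r y. (act r x, act r y)\<in>\<eta> \<longrightarrow> (x,y)\<in>\<epsilon>)"
proof -
  obtain S \<delta> where S: "syndetic S" "entourage \<delta>"
    "\<And>y t. y \<notin> ent_ball \<epsilon> x \<Longrightarrow> t \<in> S \<Longrightarrow> act t y \<notin> ent_ball \<delta> (act t x)"
    using sd e unfolding syndetically_distal_def by blast
  obtain K where K: "compact K" "\<And>t. (\<lambda>k. k + t) ` K \<inter> S \<noteq> {}"
    using S(1) unfolding syndetic_def by blast
  have "\<exists>\<eta>. entourage \<eta> \<and> (\<forall>k\<in>K. \<forall>u v. (u,v)\<in>\<eta> \<longrightarrow> (act k u, act k v) \<in> \<delta>)"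
    by (rule unif[OF cpt _ S(2)]) (rule K_pointwise[OF flow K(1)])
  then obtain \<eta> where \<eta>: "entourage \<eta>" "\<And>k u v. k \<in> K \<Longrightarrow> (u,v)\<in>\<eta> \<Longrightarrow> (act k u, act k v) \<in> \<delta>"
    by blast
  have "(x,y)\<in>\<epsilon>" if "(act r x, act r y)\<in>\<eta>" for r y
  proof (rule ccontr)
    assume ne: "(x,y) \<notin> \<epsilon>"
    obtain k where k: "k \<in> K" "k + r \<in> S" using K(2)[of r] by blast
    have "(act k (act r x), act k (act r y)) \<in> \<delta>" using \<eta>(2)[OF k(1) that] .
    then have "act (k + r) y \<in> ent_ball \<delta> (act (k + r) x)"
      by (simp add: act_add[OF flow] ent_ball_def)
    moreover have "y \<notin> ent_ball \<epsilon> x" using ne by (simp add: ent_ball_def)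
    ultimately show False using S(3) k(2) by blast
  qed
  then show ?thesis using \<eta>(1) by blast
qed

lemma EQ:
  assumes e: "entourage \<epsilon>"
  shows "\<exists>\<eta>. entourage \<eta> \<and> (\<forall>r y. (x,y)\<in>\<eta> \<longrightarrow> (act r x, act r y)\<in>\<epsilon>)"
proof (rule ccontr)
  assume "\<not> ?thesis"
  then have neg: "\<And>\<eta>. entourage \<eta> \<Longrightarrow> \<exists>r y. (x,y)\<in>\<eta> \<and> (act r x, act r y)\<notin>\<epsilon>" by blast
  have "\<exists>c. \<forall>\<alpha> \<eta>. entourage \<alpha> \<longrightarrow> entourage \<eta> \<longrightarrow>
          (\<exists>r y. (x,y)\<in>\<eta> \<and> (act r x, act r y)\<notin>\<epsilon> \<and> (c, act r x)\<in>\<alpha>)"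
  proof (rule ccontr)
    assume "\<not> ?thesis"
    then have "\<forall>c. \<exists>\<alpha> \<eta>. entourage \<alpha> \<and> entourage \<eta> \<and>
      (\<forall>r y. (x,y)\<in>\<eta> \<longrightarrow> (act r x, act r y)\<notin>\<epsilon> \<longrightarrow> (c, act r x)\<notin>\<alpha>)" by blast
    then obtain \<alpha> \<eta> where a: "\<And>c. entourage (\<alpha> c) \<and> entourage (\<eta> c) \<and>
      (\<forall>r y. (x,y)\<in>\<eta> c \<longrightarrow> (act r x, act r y)\<notin>\<epsilon> \<longrightarrow> (c, act r x)\<notin>\<alpha> c)" by metis
    have "\<forall>c. \<exists>U. open U \<and> c \<in> U \<and> (\<forall>y\<in>U. (c,y) \<in> \<alpha> c)"
      using ent_nbhd' a by metis
    then obtain U where U: "\<And>c. open (U c) \<and> c \<in> U c \<and> (\<forall>y\<in>U c. (c,y) \<in> \<alpha> c)" by metis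
    have UU: "\<And>c. c \<in> UNIV \<Longrightarrow> open (U c) \<and> c \<in> U c" using U by simp
    from compact_cover'[OF cpt UU] obtain C where C: "finite C" "\<forall>p\<in>UNIV. \<exists>c\<in>C. p \<in> U c"
      by blast
    have "entourage (\<Inter>c\<in>C. \<eta> c)" using C(1) a by (intro ent_INT) auto
    from neg[OF this] obtain r y where ry: "(x,y)\<in>(\<Inter>c\<in>C. \<eta> c)" "(act r x, act r y)\<notin>\<epsilon>" by blast
    obtain c where c: "c \<in> C" "act r x \<in> U c" using C(2) by blast
    then have "(c, act r x) \<in> \<alpha> c" using U by blast
    moreover have "(x,y) \<in> \<eta> c" using ry(1) c(1) by blast
    ultimately show False using a ry(2) by blast
  qed
  then obtain c where c: "\<And>\<alpha> \<eta>. entourage \<alpha> \<Longrightarrow> entourage \<eta> \<Longrightarrow>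
          (\<exists>r y. (x,y)\<in>\<eta> \<and> (act r x, act r y)\<notin>\<epsilon> \<and> (c, act r x)\<in>\<alpha>)" by blast
  obtain e1 where e1: "entourage e1" "\<And>x y. (x,y) \<in> e1 \<Longrightarrow> (y,x) \<in> e1"
    "\<And>x y z. (x,y) \<in> e1 \<Longrightarrow> (y,z) \<in> e1 \<Longrightarrow> (x,z) \<in> \<epsilon>"
    using ent_half'[OF e] by blast
  obtain \<eta>c where \<eta>c: "entourage \<eta>c" "\<And>r y. (act r c, act r y)\<in>\<eta>c \<Longrightarrow> (c,y)\<in>e1"
    using L[OF e1(1), of c] by blast
  obtain \<eta>2 where \<eta>2: "entourage \<eta>2" "\<And>x y. (x,y) \<in> \<eta>2 \<Longrightarrow> (y,x) \<in> \<eta>2"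
    "\<And>x y z. (x,y) \<in> \<eta>2 \<Longrightarrow> (y,z) \<in> \<eta>2 \<Longrightarrow> (x,z) \<in> \<eta>c"
    using ent_half'[OF \<eta>c(1)] by blast
  obtain \<eta>x where \<eta>x: "entourage \<eta>x" "\<And>r y. (act r x, act r y)\<in>\<eta>x \<Longrightarrow> (x,y)\<in>\<eta>2"
    using L[OF \<eta>2(1), of x] by blast
  have "entourage (e1 \<inter> converse \<eta>x)" using e1(1) \<eta>x(1) by (intro ent_Int ent_conv)
  from c[OF this \<eta>2(1)] obtain r y where ry: "(x,y)\<in>\<eta>2" "(act r x, act r y)\<notin>\<epsilon>"
    "(c, act r x)\<in>e1" "(act r x, c) \<in> \<eta>x" by blast
  define w where "w = act (- r) c"
  have cw: "act r w = c" unfolding w_def by (rule act_inv2[OF flow])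
  have xw: "(x, w) \<in> \<eta>2" using \<eta>x(2)[of r w] ry(4) cw by simp
  have wy: "(w, y) \<in> \<eta>c" using \<eta>2(3)[OF \<eta>2(2)[OF xw] ry(1)] .
  have "(act (-r) c, act (-r) (act r y)) \<in> \<eta>c" using wy by (simp add: w_def act_inv1[OF flow])
  then have "(c, act r y) \<in> e1" by (rule \<eta>c(2))
  then have "(act r x, act r y) \<in> \<epsilon>" using e1(2)[OF ry(3)] e1(3) by blast
  then show False using ry(2) by blast
qed

lemma UEQ:
  assumes e: "entourage \<epsilon>"
  shows "\<exists>\<eta>. entourage \<eta> \<and> (\<forall>r u v. (u,v)\<in>\<eta> \<longrightarrow> (act r u, act r v)\<in>\<epsilon>)"
  using unif[OF cpt _ e, of UNIV act] EQ by auto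

end

lemma TB:
  assumes cpt: "compact (UNIV :: 'x::uniform_space set)" and D: "entourage D"
  shows "\<exists>C. finite C \<and> (\<forall>p::'x. \<exists>c\<in>C. (c,p)\<in>D)"
proof -
  have "\<forall>c. \<exists>U. open U \<and> c \<in> U \<and> (\<forall>y\<in>U. (c,y) \<in> D)"
    using ent_nbhd'[OF D] by metis
  then obtain U where U: "\<And>c. open (U c) \<and> c \<in> U c \<and> (\<forall>y\<in>U c. (c,y) \<in> D)" by metis
  have UU: "\<And>c. c \<in> UNIV \<Longrightarrow> open (U c) \<and> c \<in> U c" using U by simp
  from compact_cover'[OF cpt UU] obtain C where C: "finite C" "\<forall>p\<in>UNIV. \<exists>c\<in>C. p \<in> U c"
    by blast
  have "\<forall>p. \<exists>c\<in>C. (c,p)\<in>D"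
  proof
    fix p
    obtain c where "c \<in> C" "p \<in> U c" using C(2) by blast
    then show "\<exists>c\<in>C. (c,p)\<in>D" using U by blast
  qed
  then show ?thesis using C(1) by blast
qed

context
  fixes act :: "'g::{topological_group_add, t2_space} \<Rightarrow> 'x::{uniform_space, t2_space} \<Rightarrow> 'x"
  assumes flow: "is_flow act" and cpt: "compact (UNIV :: 'x set)"
    and sd: "syndetically_distal act"
begin

lemma finite_approx:
  assumes E: "entourage E"
  shows "\<exists>F. finite F \<and> (\<forall>s. \<exists>f\<in>F. \<forall>w. (act s w, act f w) \<in> E)"
proof -
  obtain E2 where E2: "entourage E2" "\<And>x y. (x,y) \<in> E2 \<Longrightarrow> (y,x) \<in> E2"
    "\<And>x y z. (x,y) \<in> E2 \<Longrightarrow> (y,z) \<in> E2 \<Longrightarrow> (x,z) \<in> E"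
    using ent_half'[OF E] by blast
  obtain e1 where e1: "entourage e1" "\<And>x y. (x,y) \<in> e1 \<Longrightarrow> (y,x) \<in> e1"
    "\<And>x y z. (x,y) \<in> e1 \<Longrightarrow> (y,z) \<in> e1 \<Longrightarrow> (x,z) \<in> E2"
    using ent_half'[OF E2(1)] by blast
  obtain \<eta> where \<eta>: "entourage \<eta>" "\<And>r u v. (u,v)\<in>\<eta> \<Longrightarrow> (act r u, act r v)\<in>e1"
    using UEQ[OF flow cpt sd e1(1)] by blast
  obtain C where C: "finite C" "\<And>p. \<exists>c\<in>C. (c,p)\<in>\<eta>" using TB[OF cpt \<eta>(1)] by blast
  obtain Ds where Ds: "finite Ds" "\<And>p. \<exists>d\<in>Ds. (d,p)\<in>e1" using TB[OF cpt e1(1)] by blast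
  define \<phi> where "\<phi> s = (\<lambda>c\<in>C. SOME d. d \<in> Ds \<and> (d, act s c) \<in> e1)" for s
  have phi: "\<phi> s c \<in> Ds \<and> (\<phi> s c, act s c) \<in> e1" if "c \<in> C" for s c
  proof -
    have "\<exists>d. d \<in> Ds \<and> (d, act s c) \<in> e1" using Ds(2) by blast
    then have "(SOME d. d \<in> Ds \<and> (d, act s c) \<in> e1) \<in> Ds \<and> (SOME d. d \<in> Ds \<and> (d, act s c) \<in> e1, act s c) \<in> e1"
      by (rule someI_ex)
    then show ?thesis unfolding \<phi>_def using that by simp
  qed
  have "range \<phi> \<subseteq> (\<Pi>\<^sub>E c\<in>C. Ds)" using phi unfolding \<phi>_def by auto
  then have fin: "finite (range \<phi>)" using finite_PiE[OF C(1), of "\<lambda>_. Ds"] Ds(1) finite_subset by blast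
  define F where "F = (\<lambda>\<psi>. SOME s. \<phi> s = \<psi>) ` range \<phi>"
  have "finite F" unfolding F_def using fin by simp
  moreover have "\<exists>f\<in>F. \<forall>w. (act s w, act f w) \<in> E" for s
  proof -
    define f where "f = (SOME s'. \<phi> s' = \<phi> s)"
    have fF: "f \<in> F" unfolding F_def f_def by blast
    have pf: "\<phi> f = \<phi> s" unfolding f_def by (rule someI[of "\<lambda>s'. \<phi> s' = \<phi> s" s]) simp
    have "(act s w, act f w) \<in> E" for w
    proof -
      obtain c where c: "c \<in> C" "(c,w) \<in> \<eta>" using C(2) by blast
      have 1: "(act s c, act s w) \<in> e1" using \<eta>(2)[OF c(2)] .
      have 2: "(act f c, act f w) \<in> e1" using \<eta>(2)[OF c(2)] .
      have 3: "(\<phi> s c, act s c) \<in> e1" using phi[OF c(1)] by blast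
      have 4: "(\<phi> s c, act f c) \<in> e1" using phi[OF c(1), of f] pf by simp
      have a: "(act s w, \<phi> s c) \<in> E2" using e1(3)[OF e1(2)[OF 1] e1(2)[OF 3]] .
      have b: "(\<phi> s c, act f w) \<in> E2" using e1(3)[OF 4 2] .
      show ?thesis using E2(3)[OF a b] .
    qed
    then show ?thesis using fF by blast
  qed
  ultimately show ?thesis by blast
qed

lemma invariant: "act a ` closure (orbit act x) \<subseteq> closure (orbit act x)"
proof (rule image_closure_subset)
  have g: "continuous_on UNIV (\<lambda>p. act (fst p) (snd p))" using flow unfolding is_flow_def by blast
  have "continuous_on UNIV ((\<lambda>p. act (fst p) (snd p)) \<circ> (\<lambda>z. (a,z)))"
    by (rule continuous_on_compose) (auto intro!: continuous_intros continuous_on_subset[OF g])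
  then show "continuous_on (closure (orbit act x)) (act a)"
    by (auto simp: o_def intro: continuous_on_subset)
  show "closed (closure (orbit act x))" by simp
  show "act a ` orbit act x \<subseteq> closure (orbit act x)"
    unfolding orbit_def by (auto simp: act_add[OF flow, symmetric] intro!: closure_subset[THEN subsetD])
qed

lemma main: "ap_subflow act (closure (orbit act x))"
  unfolding ap_subflow_def
proof (intro allI impI)
  fix E :: "('x \<times> 'x) set"
  assume E: "entourage E"
  obtain F where F: "finite F" "\<And>s. \<exists>f\<in>F. \<forall>w. (act s w, act f w) \<in> E"
    using finite_approx[OF E] by blast
  define A where "A = {a. \<forall>z. (z, act a z) \<in> E}"
  have "syndetic A" unfolding syndetic_def
  proof (intro exI conjI allI)
    show "compact F" using F(1) by (rule finite_imp_compact)
    fix t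
    obtain f where f: "f \<in> F" "\<And>w. (act (-t) w, act f w) \<in> E" using F(2)[of "-t"] by blast
    have "f + t \<in> A" unfolding A_def
    proof
      show "\<forall>z. (z, act (f + t) z) \<in> E"
      proof
        fix z
        show "(z, act (f + t) z) \<in> E" using f(2)[of "act t z"]
          by (simp add: act_add[OF flow] act_inv1[OF flow])
      qed
    qed
    then show "(\<lambda>k. k + t) ` F \<inter> A \<noteq> {}" using f(1) by blast
  qed
  moreover have "\<forall>z\<in>closure (orbit act x). (\<lambda>a. act a z) ` A \<subseteq> ent_ball (E \<inter> closure (orbit act x) \<times> closure (orbit act x)) z"
    using invariant unfolding A_def ent_ball_def by blast
  ultimately show "\<exists>A. syndetic A \<and> (\<forall>z\<in>closure (orbit act x). (\<lambda>a. act a z) ` A \<subseteq> ent_ball (E \<inter> closure (orbit act x) \<times> closure (orbit act x)) z)"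
    by blast
qed

end

theorem theorem2p10:
  fixes act :: "'g::{topological_group_add, t2_space} \<Rightarrow> 'x::{uniform_space, t2_space} \<Rightarrow> 'x"
  assumes "compact (UNIV :: 'x set)"
    and "is_flow act"
    and "syndetically_distal act"
  shows "\<forall>x. ap_subflow act (closure (orbit act x))"
  using main[OF assms(2) assms(1) assms(3)] by blast

end
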